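(* Let $\mathcal{A}=\mathcal{R}*_K\mathcal{S}*_L\mathcal{T}\in\mathbb{C}^{I_1\times\cdots\times I_N\times J_1\times\cdots\times J_M}$, where $\mathcal{R}\in\mathbb{C}^{I_1\times\cdots\times I_N\times H_1\times\cdots\times H_K}$, $\mathcal{S}\in\mathbb{C}^{H_1\times\cdots\times H_K\times G_1\times\cdots\times G_L}$ and $\mathcal{T}\in\mathbb{C}^{G_1\times\cdots\times G_L\times J_1\times\cdots\times J_M}$, and write $\mathcal{Z}=\mathcal{T}^{\dagger}*_L\mathcal{S}^{\dagger}*_K\mathcal{R}^{\dagger}$. Then $\mathcal{A}^{\dagger}=\mathcal{Z}$ if and only if all of the following hold: (i) $\mathcal{R}^{\dagger}*_N\mathcal{A}*_M\mathcal{Z}*_N\mathcal{A}*_M\mathcal{T}^{\dagger}=\mathcal{R}^{\dagger}*_N\mathcal{A}*_M\mathcal{T}^{\dagger}$; (ii) $\mathcal{T}*_M\mathcal{Z}*_N\mathcal{A}*_M\mathcal{Z}*_N\mathcal{R}=\mathcal{T}*_M\mathcal{Z}*_N\mathcal{R}$; (iii) $[\mathcal{R}^H*_N\mathcal{A}*_M\mathcal{Z}*_N\mathcal{R}]^H=\mathcal{R}^H*_N\mathcal{A}*_M\mathcal{Z}*_N\mathcal{R}$; (iv) $[\mathcal{T}*_M\mathcal{Z}*_N\mathcal{A}*_M\mathcal{T}^H]^H=\mathcal{T}*_M\mathcal{Z}*_N\mathcal{A}*_M\mathcal{T}^H$.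
   Context: $\mathbb{C}^{I_1\times\cdots\times I_N}$ denotes the set of complex tensors of order $N$ and dimension $I_1\times\cdots\times I_N$. For $\mathcal{A}\in\mathbb{C}^{I_1\times\cdots\times I_N\times K_1\times\cdots\times K_N}$ and $\mathcal{B}\in\mathbb{C}^{K_1\times\cdots\times K_N\times J_1\times\cdots\times J_M}$, the Einstein product $\mathcal{A}*_N\mathcal{B}$ is defined by $(\mathcal{A}*_N\mathcal{B})_{i_1\dots i_N j_1\dots j_M}=\sum_{k_1,\dots,k_N}a_{i_1\dots i_N k_1\dots k_N}b_{k_1\dots k_N j_1\dots j_M}$; it is associative. For $\mathcal{A}\in\mathbb{C}^{I_1\times\cdots\times I_N\times J_1\times\cdots\times J_M}$, $\mathcal{A}^H\in\mathbb{C}^{J_1\times\cdots\times J_M\times I_1\times\cdots\times I_N}$ has entries $(\mathcal{A}^H)_{j_1\dots j_M i_1\dots i_N}=\overline{a_{i_1\dots i_N j_1\dots j_M}}$, and the Moore–Penrose inverse $\mathcal{A}^{\dagger}$ is the unique $\mathcal{X}\in\mathbb{C}^{J_1\times\cdots\times J_M\times I_1\times\cdots\times I_N}$ with $\mathcal{A}*_M\mathcal{X}*_N\mathcal{A}=\mathcal{A}$, $\mathcal{X}*_N\mathcal{A}*_M\mathcal{X}=\mathcal{X}$, $(\mathcal{A}*_M\mathcal{X})^H=\mathcal{A}*_M\mathcal{X}$, $(\mathcal{X}*_N\mathcal{A})^H=\mathcal{X}*_N\mathcal{A}$. *)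

theory Defs
  imports Complex_Main
begin

text \<open>A tensor in C^(D_1 x ... x D_n) is modelled as a function from index lists
  (0-based) to complex numbers, with dimension list ds = [D_1,...,D_n]; it is required
  to vanish outside the valid index set.\<close>

definition multi_idx :: "nat list \<Rightarrow> nat list set" where
  "multi_idx ds = {x. length x = length ds \<and> (\<forall>i<length ds. x ! i < ds ! i)}"

definition tensor :: "nat list \<Rightarrow> (nat list \<Rightarrow> complex) \<Rightarrow> bool" where
  "tensor ds A \<longleftrightarrow> (\<forall>x. x \<notin> multi_idx ds \<longrightarrow> A x = 0)"

definition ein :: "nat list \<Rightarrow> nat list \<Rightarrow> nat list \<Rightarrow>
    (nat list \<Rightarrow> complex) \<Rightarrow> (nat list \<Rightarrow> complex) \<Rightarrow> (nat list \<Rightarrow> complex)" where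
  "ein Is Ks Js A B = (\<lambda>x. if x \<in> multi_idx (Is @ Js)
      then (\<Sum>k\<in>multi_idx Ks. A (take (length Is) x @ k) * B (k @ drop (length Is) x))
      else 0)"

definition herm :: "nat list \<Rightarrow> nat list \<Rightarrow> (nat list \<Rightarrow> complex) \<Rightarrow> (nat list \<Rightarrow> complex)" where
  "herm Is Js A = (\<lambda>x. if x \<in> multi_idx (Js @ Is)
      then cnj (A (drop (length Js) x @ take (length Js) x)) else 0)"

definition is_MP :: "nat list \<Rightarrow> nat list \<Rightarrow> (nat list \<Rightarrow> complex) \<Rightarrow> (nat list \<Rightarrow> complex) \<Rightarrow> bool" where
  "is_MP Is Js A X \<longleftrightarrow> tensor (Js @ Is) X
     \<and> ein Is Js Js A (ein Js Is Js X A) = A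
     \<and> ein Js Is Is X (ein Is Js Is A X) = X
     \<and> herm Is Is (ein Is Js Is A X) = ein Is Js Is A X
     \<and> herm Js Js (ein Js Is Js X A) = ein Js Is Js X A"

definition pinv :: "nat list \<Rightarrow> nat list \<Rightarrow> (nat list \<Rightarrow> complex) \<Rightarrow> (nat list \<Rightarrow> complex)" where
  "pinv Is Js A = (THE X. is_MP Is Js A X)"

end

theory Submission
  imports Defs "HOL-Library.Function_Algebras"
begin


lemma multi_idx_len: "x \<in> multi_idx ds \<Longrightarrow> length x = length ds"
  by (simp add: multi_idx_def)

lemma multi_idx_append:
  assumes "length i = length Is"
  shows "i @ j \<in> multi_idx (Is @ Js) \<longleftrightarrow> i \<in> multi_idx Is \<and> j \<in> multi_idx Js"
proof
  assume h: "i @ j \<in> multi_idx (Is @ Js)"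
  hence lj: "length j = length Js" using assms by (simp add: multi_idx_def)
  have a: "\<forall>k<length Is + length Js. (i @ j) ! k < (Is @ Js) ! k" using h by (simp add: multi_idx_def)
  have "\<forall>k<length Is. i ! k < Is ! k"
  proof (intro allI impI)
    fix k assume "k < length Is"
    thus "i ! k < Is ! k" using a[rule_format, of k] assms by (simp add: nth_append)
  qed
  moreover have "\<forall>k<length Js. j ! k < Js ! k"
  proof (intro allI impI)
    fix k assume "k < length Js"
    thus "j ! k < Js ! k" using a[rule_format, of "length Is + k"] assms by (simp add: nth_append)
  qed
  ultimately show "i \<in> multi_idx Is \<and> j \<in> multi_idx Js" using assms lj by (simp add: multi_idx_def)
next
  assume h: "i \<in> multi_idx Is \<and> j \<in> multi_idx Js"
  show "i @ j \<in> multi_idx (Is @ Js)"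
    unfolding multi_idx_def
  proof (intro CollectI conjI allI impI)
    show "length (i @ j) = length (Is @ Js)" using h by (simp add: multi_idx_def)
    fix k assume k: "k < length (Is @ Js)"
    show "(i @ j) ! k < (Is @ Js) ! k"
    proof (cases "k < length Is")
      case True thus ?thesis using h assms by (simp add: nth_append multi_idx_def)
    next
      case False thus ?thesis using h assms k by (simp add: nth_append multi_idx_def)
    qed
  qed
qed

lemma multi_idx_split:
  assumes "x \<in> multi_idx (Is @ Js)"
  obtains i j where "x = i @ j" "i \<in> multi_idx Is" "j \<in> multi_idx Js"
proof -
  have "length x = length Is + length Js" using assms by (simp add: multi_idx_def)
  hence l: "length (take (length Is) x) = length Is" by simp
  have x: "x = take (length Is) x @ drop (length Is) x" by simp
  with assms multi_idx_append[OF l, of "drop (length Is) x" Js] that show ?thesis by metis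
qed

lemma finite_multi_idx: "finite (multi_idx ds)"
proof -
  have "multi_idx ds \<subseteq> {xs. set xs \<subseteq> {..<sum_list ds} \<and> length xs = length ds}"
  proof
    fix x assume x: "x \<in> multi_idx ds"
    have "\<forall>a\<in>set x. a < sum_list ds"
    proof
      fix a assume "a \<in> set x"
      then obtain k where k: "k < length x" "x ! k = a" by (metis in_set_conv_nth)
      hence "a < ds ! k" "k < length ds" using x by (auto simp: multi_idx_def)
      moreover have "ds ! k \<le> sum_list ds" using \<open>k < length ds\<close>
        by (metis elem_le_sum_list)
      ultimately show "a < sum_list ds" by linarith
    qed
    thus "x \<in> {xs. set xs \<subseteq> {..<sum_list ds} \<and> length xs = length ds}"
      using x by (auto simp: multi_idx_def)
  qed
  moreover have "finite {xs. set xs \<subseteq> {..<sum_list ds} \<and> length xs = length ds}"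
    by (rule finite_lists_length_eq) simp
  ultimately show ?thesis by (rule finite_subset)
qed

lemma ein_app:
  assumes "i \<in> multi_idx Is" "j \<in> multi_idx Js"
  shows "ein Is Ks Js A B (i @ j) = (\<Sum>k\<in>multi_idx Ks. A (i @ k) * B (k @ j))"
  using assms multi_idx_append[of i Is j Js] by (simp add: ein_def multi_idx_len)

lemma herm_app:
  assumes "i \<in> multi_idx Is" "j \<in> multi_idx Js"
  shows "herm Is Js A (j @ i) = cnj (A (i @ j))"
  using assms multi_idx_append[of j Js i Is] by (simp add: herm_def multi_idx_len)

lemma tensor_ein: "tensor (Is @ Js) (ein Is Ks Js A B)"
  by (simp add: tensor_def ein_def)

lemma tensor_herm: "tensor (Js @ Is) (herm Is Js A)"
  by (simp add: tensor_def herm_def)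

lemma tensor_eqI:
  assumes "tensor (Is @ Js) X" "tensor (Is @ Js) Y"
    and "\<And>i j. i \<in> multi_idx Is \<Longrightarrow> j \<in> multi_idx Js \<Longrightarrow> X (i @ j) = Y (i @ j)"
  shows "X = Y"
proof
  fix x show "X x = Y x"
  proof (cases "x \<in> multi_idx (Is @ Js)")
    case True then obtain i j where "x = i @ j" "i \<in> multi_idx Is" "j \<in> multi_idx Js"
      by (rule multi_idx_split)
    thus ?thesis using assms(3) by simp
  next
    case False thus ?thesis using assms(1,2) by (simp add: tensor_def)
  qed
qed

lemma ein_assoc:
  "ein Is Ks Ls A (ein Ks Ms Ls B C) = ein Is Ms Ls (ein Is Ks Ms A B) C"
proof (rule tensor_eqI[OF tensor_ein tensor_ein])
  fix i l assume i: "i \<in> multi_idx Is" and l: "l \<in> multi_idx Ls"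
  have "ein Is Ks Ls A (ein Ks Ms Ls B C) (i @ l)
      = (\<Sum>k\<in>multi_idx Ks. A (i @ k) * (\<Sum>m\<in>multi_idx Ms. B (k @ m) * C (m @ l)))"
    using i l by (simp add: ein_app)
  also have "\<dots> = (\<Sum>k\<in>multi_idx Ks. \<Sum>m\<in>multi_idx Ms. A (i @ k) * B (k @ m) * C (m @ l))"
    by (simp add: sum_distrib_left mult.assoc)
  also have "\<dots> = (\<Sum>m\<in>multi_idx Ms. \<Sum>k\<in>multi_idx Ks. A (i @ k) * B (k @ m) * C (m @ l))"
    by (rule sum.swap)
  also have "\<dots> = (\<Sum>m\<in>multi_idx Ms. (\<Sum>k\<in>multi_idx Ks. A (i @ k) * B (k @ m)) * C (m @ l))"
    by (simp add: sum_distrib_right)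
  also have "\<dots> = ein Is Ms Ls (ein Is Ks Ms A B) C (i @ l)"
    using i l by (simp add: ein_app)
  finally show "ein Is Ks Ls A (ein Ks Ms Ls B C) (i @ l) = ein Is Ms Ls (ein Is Ks Ms A B) C (i @ l)" .
qed

lemma herm_ein:
  "herm Is Ls (ein Is Ks Ls A B) = ein Ls Ks Is (herm Ks Ls B) (herm Is Ks A)"
proof (rule tensor_eqI[OF tensor_herm tensor_ein])
  fix l i assume l: "l \<in> multi_idx Ls" and i: "i \<in> multi_idx Is"
  have "herm Is Ls (ein Is Ks Ls A B) (l @ i) = cnj (\<Sum>k\<in>multi_idx Ks. A (i @ k) * B (k @ l))"
    using i l by (simp add: herm_app ein_app)
  also have "\<dots> = (\<Sum>k\<in>multi_idx Ks. herm Ks Ls B (l @ k) * herm Is Ks A (k @ i))"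
    using i l by (auto simp: herm_app mult.commute intro!: sum.cong)
  also have "\<dots> = ein Ls Ks Is (herm Ks Ls B) (herm Is Ks A) (l @ i)"
    using i l by (simp add: ein_app)
  finally show "herm Is Ls (ein Is Ks Ls A B) (l @ i) = ein Ls Ks Is (herm Ks Ls B) (herm Is Ks A) (l @ i)" .
qed

lemma herm_herm: "tensor (Is @ Js) A \<Longrightarrow> herm Js Is (herm Is Js A) = A"
  by (rule tensor_eqI[OF tensor_herm]) (auto simp: herm_app)

definition sc :: "complex \<Rightarrow> (nat list \<Rightarrow> complex) \<Rightarrow> (nat list \<Rightarrow> complex)" where
  "sc c X = (\<lambda>x. c * X x)"

lemma fun_sum_apply: "(\<Sum>k\<in>K. f k) x = (\<Sum>k\<in>K. f k x)"
  by (induction K rule: infinite_finite_induct) auto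

lemma tensor_diff: "tensor D X \<Longrightarrow> tensor D Y \<Longrightarrow> tensor D (X - Y)"
  by (simp add: tensor_def)

lemma tensor_add: "tensor D X \<Longrightarrow> tensor D Y \<Longrightarrow> tensor D (X + Y)"
  by (simp add: tensor_def)

lemma tensor_sc: "tensor D X \<Longrightarrow> tensor D (sc c X)"
  by (simp add: tensor_def sc_def)

lemma tensor_zero: "tensor D 0"
  by (simp add: tensor_def)

lemma ein_diff_left: "ein Is Ks Js (A - A') B = ein Is Ks Js A B - ein Is Ks Js A' B"
  by (rule ext) (simp add: ein_def algebra_simps sum_subtractf)

lemma ein_diff_right: "ein Is Ks Js A (B - B') = ein Is Ks Js A B - ein Is Ks Js A B'"
  by (rule ext) (simp add: ein_def algebra_simps sum_subtractf)

lemma ein_add_left: "ein Is Ks Js (A + A') B = ein Is Ks Js A B + ein Is Ks Js A' B"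
  by (rule ext) (simp add: ein_def algebra_simps sum.distrib)

lemma ein_add_right: "ein Is Ks Js A (B + B') = ein Is Ks Js A B + ein Is Ks Js A B'"
  by (rule ext) (simp add: ein_def algebra_simps sum.distrib)

lemma ein_sc_left: "ein Is Ks Js (sc c A) B = sc c (ein Is Ks Js A B)"
  by (rule ext) (simp add: ein_def sc_def sum_distrib_left mult.assoc)

lemma ein_sc_right: "ein Is Ks Js A (sc c B) = sc c (ein Is Ks Js A B)"
  by (rule ext) (simp add: ein_def sc_def sum_distrib_left algebra_simps)

lemma ein_zero_left: "ein Is Ks Js 0 B = 0"
  by (rule ext) (simp add: ein_def)

lemma ein_zero_right: "ein Is Ks Js A 0 = 0"
  by (rule ext) (simp add: ein_def)

lemma ein_sum_left: "ein Is Ks Js (\<Sum>k\<in>K. f k) B = (\<Sum>k\<in>K. ein Is Ks Js (f k) B)"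
  by (rule ext) (auto simp: ein_def fun_sum_apply sum_distrib_right intro: sum.swap)

lemma ein_sum_right: "ein Is Ks Js A (\<Sum>k\<in>K. f k) = (\<Sum>k\<in>K. ein Is Ks Js A (f k))"
  by (rule ext) (auto simp: ein_def fun_sum_apply sum_distrib_left intro: sum.swap)

lemma herm_diff: "herm Is Js (A - B) = herm Is Js A - herm Is Js B"
  by (rule ext) (simp add: herm_def)

lemma herm_add: "herm Is Js (A + B) = herm Is Js A + herm Is Js B"
  by (rule ext) (simp add: herm_def)

lemma herm_sc: "herm Is Js (sc c A) = sc (cnj c) (herm Is Js A)"
  by (rule ext) (simp add: herm_def sc_def)

definition idt :: "nat list \<Rightarrow> nat list \<Rightarrow> complex" where
  "idt Ds = (\<lambda>x. if x \<in> multi_idx (Ds @ Ds) \<and> take (length Ds) x = drop (length Ds) x then 1 else 0)"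

lemma tensor_idt: "tensor (Ds @ Ds) (idt Ds)"
  by (simp add: tensor_def idt_def)

lemma idt_app: "k \<in> multi_idx Ds \<Longrightarrow> j \<in> multi_idx Ds \<Longrightarrow> idt Ds (k @ j) = (if k = j then 1 else 0)"
  using multi_idx_append[of k Ds j Ds] by (simp add: idt_def multi_idx_len)

lemma ein_idt_right: "tensor (Is @ Ds) A \<Longrightarrow> ein Is Ds Ds A (idt Ds) = A"
  by (rule tensor_eqI[OF tensor_ein]) (auto simp: ein_app idt_app if_distrib sum.delta finite_multi_idx cong: if_cong)

lemma sum_delta_mult: "finite K \<Longrightarrow> (\<Sum>k\<in>K. (if i = k then 1 else 0) * g k) = (if i \<in> K then g i else (0::complex))"
proof -
  assume "finite K"
  have "(\<Sum>k\<in>K. (if i = k then 1 else 0) * g k) = (\<Sum>k\<in>K. if i = k then g k else 0)"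
    by (rule sum.cong) auto
  thus ?thesis using \<open>finite K\<close> by (simp add: sum.delta)
qed

lemma ein_idt_left: "tensor (Ds @ Js) A \<Longrightarrow> ein Ds Ds Js (idt Ds) A = A"
  by (rule tensor_eqI[OF tensor_ein]) (auto simp: ein_app idt_app sum_delta_mult finite_multi_idx)

lemma herm_idt: "herm Ds Ds (idt Ds) = idt Ds"
  by (rule tensor_eqI[OF tensor_herm tensor_idt]) (auto simp: herm_app idt_app)

lemma gram_zero:
  assumes t: "tensor (Is @ Ks) E" and z: "ein Ks Is Ks (herm Is Ks E) E = 0"
  shows "E = 0"
proof (rule tensor_eqI[OF t tensor_zero])
  fix i k assume i: "i \<in> multi_idx Is" and k: "k \<in> multi_idx Ks"
  have "ein Ks Is Ks (herm Is Ks E) E (k @ k) = 0" using z by simp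
  hence "(\<Sum>i'\<in>multi_idx Is. cnj (E (i' @ k)) * E (i' @ k)) = 0"
    using k by (simp add: ein_app herm_app)
  moreover have eq: "\<And>z. cnj z * z = complex_of_real ((cmod z)\<^sup>2)"
    by (simp only: complex_norm_square mult.commute)
  ultimately have s: "(\<Sum>i'\<in>multi_idx Is. complex_of_real ((cmod (E (i' @ k)))\<^sup>2)) = 0"
    by (simp only: eq)
  hence "(\<Sum>i'\<in>multi_idx Is. (cmod (E (i' @ k)))\<^sup>2) = 0"
    by (metis of_real_eq_0_iff of_real_sum)
  hence "\<forall>i'\<in>multi_idx Is. (cmod (E (i' @ k)))\<^sup>2 = 0"
    by (subst (asm) sum_nonneg_eq_0_iff) (auto simp: finite_multi_idx)
  thus "E (i @ k) = 0 (i @ k)" using i by simp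
qed



lemma MP_unique:
  assumes X: "is_MP Is Js A X" and Y: "is_MP Is Js A Y"
  shows "X = Y"
proof -
  note x = X[unfolded is_MP_def] and y = Y[unfolded is_MP_def]
  have hA1: "herm Is Js A = ein Js Is Is (herm Is Js A) (ein Is Js Is A Y)"
  proof -
    have "herm Is Js A = herm Is Js (ein Is Is Js (ein Is Js Is A Y) A)"
      using y by (simp add: ein_assoc)
    also have "\<dots> = ein Js Is Is (herm Is Js A) (herm Is Is (ein Is Js Is A Y))"
      by (simp add: herm_ein)
    also have "\<dots> = ein Js Is Is (herm Is Js A) (ein Is Js Is A Y)" using y by simp
    finally show ?thesis .
  qed
  have "X = ein Js Is Is X (herm Is Is (ein Is Js Is A X))" using x by simp
  also have "\<dots> = ein Js Is Is X (ein Is Js Is (herm Js Is X) (herm Is Js A))"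
    by (simp add: herm_ein)
  also have "\<dots> = ein Js Is Is X (ein Is Js Is (herm Js Is X) (ein Js Is Is (herm Is Js A) (ein Is Js Is A Y)))"
    using hA1 by simp
  also have "\<dots> = ein Js Is Is X (ein Is Is Is (herm Is Is (ein Is Js Is A X)) (ein Is Js Is A Y))"
    by (simp add: herm_ein ein_assoc)
  also have "\<dots> = ein Js Is Is X (ein Is Is Is (ein Is Js Is A X) (ein Is Js Is A Y))"
    using x by simp
  also have "\<dots> = ein Js Is Is (ein Js Is Is X (ein Is Js Is A X)) (ein Is Js Is A Y)"
    by (simp add: ein_assoc)
  also have "\<dots> = ein Js Is Is X (ein Is Js Is A Y)" using x by simp
  finally have 1: "X = ein Js Is Is X (ein Is Js Is A Y)" .
  have hA2: "herm Is Js A = ein Js Js Is (ein Js Is Js X A) (herm Is Js A)"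
  proof -
    have "herm Is Js A = herm Is Js (ein Is Js Js A (ein Js Is Js X A))"
      using x by simp
    also have "\<dots> = ein Js Js Is (herm Js Js (ein Js Is Js X A)) (herm Is Js A)"
      by (simp add: herm_ein)
    also have "\<dots> = ein Js Js Is (ein Js Is Js X A) (herm Is Js A)" using x by simp
    finally show ?thesis .
  qed
  have "Y = ein Js Js Is (herm Js Js (ein Js Is Js Y A)) Y" using y by (simp add: ein_assoc)
  also have "\<dots> = ein Js Js Is (ein Js Is Js (herm Is Js A) (herm Js Is Y)) Y"
    by (simp add: herm_ein)
  also have "\<dots> = ein Js Js Is (ein Js Is Js (ein Js Js Is (ein Js Is Js X A) (herm Is Js A)) (herm Js Is Y)) Y"
    using hA2 by simp
  also have "\<dots> = ein Js Js Is (ein Js Js Js (ein Js Is Js X A) (herm Js Js (ein Js Is Js Y A))) Y"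
    by (simp add: herm_ein ein_assoc)
  also have "\<dots> = ein Js Js Is (ein Js Js Js (ein Js Is Js X A) (ein Js Is Js Y A)) Y"
    using y by simp
  also have "\<dots> = ein Js Js Is (ein Js Is Js X A) (ein Js Js Is (ein Js Is Js Y A) Y)"
    by (simp only: ein_assoc)
  also have "\<dots> = ein Js Is Is X (ein Is Js Is A Y)"
    using y by (simp add: ein_assoc)
  finally have 2: "Y = ein Js Is Is X (ein Is Js Is A Y)" .
  from 1 2 show ?thesis by simp
qed



lemma ein_ctx: "ein Ks Ms Ls U V = W \<Longrightarrow> ein Is Ms Ls (ein Is Ks Ms P U) V = ein Is Ks Ls P W"
  by (metis ein_assoc)

primrec pw :: "nat list \<Rightarrow> (nat list \<Rightarrow> complex) \<Rightarrow> nat \<Rightarrow> (nat list \<Rightarrow> complex)" where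
  "pw Ds B 0 = idt Ds"
| "pw Ds B (Suc k) = ein Ds Ds Ds B (pw Ds B k)"

lemma tensor_pw: "tensor (Ds @ Ds) (pw Ds B k)"
  by (cases k) (simp_all add: tensor_idt tensor_ein)

lemma pw_comm: "tensor (Ds @ Ds) B \<Longrightarrow> ein Ds Ds Ds B (pw Ds B k) = ein Ds Ds Ds (pw Ds B k) B"
proof (induction k)
  case 0 thus ?case by (simp add: ein_idt_left ein_idt_right)
next
  case (Suc k)
  have "ein Ds Ds Ds (pw Ds B (Suc k)) B = ein Ds Ds Ds B (ein Ds Ds Ds (pw Ds B k) B)"
    by (simp add: ein_assoc)
  also have "\<dots> = ein Ds Ds Ds B (pw Ds B (Suc k))" using Suc by simp
  finally show ?case by simp
qed

lemma herm_kill: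
  assumes hB: "herm Ds Ds B = B" and z: "ein Ds Ds Ds B (ein Ds Ds Ds B Z) = 0"
  shows "ein Ds Ds Ds B Z = 0"
proof (rule gram_zero[OF tensor_ein])
  have "ein Ds Ds Ds (herm Ds Ds (ein Ds Ds Ds B Z)) (ein Ds Ds Ds B Z)
     = ein Ds Ds Ds (herm Ds Ds Z) (ein Ds Ds Ds B (ein Ds Ds Ds B Z))"
    using hB by (simp add: herm_ein ein_assoc)
  also have "\<dots> = 0" using z by (simp add: ein_zero_right)
  finally show "ein Ds Ds Ds (herm Ds Ds (ein Ds Ds Ds B Z)) (ein Ds Ds Ds B Z) = 0" .
qed

lemma ein_sum_sc_right:
  "ein Is Ks Js A (\<Sum>k\<in>K. sc (c k) (f k)) = (\<Sum>k\<in>K. sc (c k) (ein Is Ks Js A (f k)))"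
  by (simp add: ein_sum_right ein_sc_right)

lemma ein_sum_sc_left:
  "ein Is Ks Js (\<Sum>k\<in>K. sc (c k) (f k)) B = (\<Sum>k\<in>K. sc (c k) (ein Is Ks Js (f k) B))"
  by (simp add: ein_sum_left ein_sc_left)

lemma ginv_from_rel:
  assumes tB: "tensor (Ds @ Ds) B" and hB: "herm Ds Ds B = B"
  shows "(\<exists>k<n. c k \<noteq> 0) \<Longrightarrow> (\<Sum>k<n. sc (c k) (pw Ds B (Suc k))) = 0 \<Longrightarrow>
     \<exists>G. tensor (Ds @ Ds) G \<and> ein Ds Ds Ds B (ein Ds Ds Ds G B) = B"
proof (induction n arbitrary: c)
  case 0 thus ?case by simp
next
  case (Suc m)
  define W where "W = (\<Sum>k<m. sc (c (Suc k)) (pw Ds B k))"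
  have tW: "tensor (Ds @ Ds) W"
    unfolding W_def tensor_def by (simp add: fun_sum_apply sc_def tensor_pw[unfolded tensor_def])
  have cW: "ein Ds Ds Ds W B = ein Ds Ds Ds B W"
    unfolding W_def ein_sum_sc_right ein_sum_sc_left using pw_comm[OF tB] by simp
  have tail: "(\<Sum>k<m. sc (c (Suc k)) (pw Ds B (Suc (Suc k)))) = ein Ds Ds Ds B (ein Ds Ds Ds B W)"
    unfolding W_def ein_sum_sc_right by simp
  have split: "(\<Sum>k<Suc m. sc (c k) (pw Ds B (Suc k))) = sc (c 0) B + ein Ds Ds Ds B (ein Ds Ds Ds B W)"
    unfolding sum.lessThan_Suc_shift tail by (simp add: ein_idt_right tB)
  show ?case
  proof (cases "c 0 = 0")
    case False
    define G where "G = sc (- 1 / c 0) W"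
    have eq: "sc (c 0) B + ein Ds Ds Ds B (ein Ds Ds Ds B W) = 0" using Suc.prems(2) split by metis
    have "B = ein Ds Ds Ds B (ein Ds Ds Ds B G)"
    proof
      fix x
      have "c 0 * B x + ein Ds Ds Ds B (ein Ds Ds Ds B W) x = 0"
        using fun_cong[OF eq, of x] by (simp add: sc_def)
      thus "B x = ein Ds Ds Ds B (ein Ds Ds Ds B G) x"
        using False unfolding G_def ein_sc_right by (simp add: sc_def field_simps eq_neg_iff_add_eq_0)
    qed
    moreover have "ein Ds Ds Ds G B = ein Ds Ds Ds B G"
      unfolding G_def ein_sc_right ein_sc_left cW ..
    ultimately have "ein Ds Ds Ds B (ein Ds Ds Ds G B) = B" by simp
    moreover have "tensor (Ds @ Ds) G" unfolding G_def by (rule tensor_sc[OF tW])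
    ultimately show ?thesis by blast
  next
    case True
    have "sc (c 0) B = 0" using True by (simp add: sc_def zero_fun_def)
    hence "ein Ds Ds Ds B (ein Ds Ds Ds B W) = 0" using Suc.prems(2) split by (metis add_0_left)
    hence "ein Ds Ds Ds B W = 0" by (rule herm_kill[OF hB])
    hence "(\<Sum>k<m. sc (c (Suc k)) (pw Ds B (Suc k))) = 0"
      unfolding W_def ein_sum_sc_right by simp
    moreover have "\<exists>k<m. c (Suc k) \<noteq> 0" using Suc.prems(1) True
      by (metis less_Suc_eq_0_disj)
    ultimately show ?thesis using Suc.IH[of "\<lambda>k. c (Suc k)"] by simp
  qed
qed



interpretation tv: vector_space sc
  by unfold_locales (auto simp: sc_def algebra_simps)

definition unitv :: "nat list \<Rightarrow> nat list \<Rightarrow> complex" where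
  "unitv d = (\<lambda>x. if x = d then 1 else 0)"

lemma tensor_in_span:
  assumes "tensor D X"
  shows "X \<in> tv.span (unitv ` multi_idx D)"
proof -
  have "X = (\<Sum>d\<in>multi_idx D. sc (X d) (unitv d))"
  proof
    fix x
    have "(\<Sum>d\<in>multi_idx D. sc (X d) (unitv d)) x = (\<Sum>d\<in>multi_idx D. if x = d then X d else 0)"
      by (simp add: fun_sum_apply sc_def unitv_def if_distrib cong: if_cong)
    also have "\<dots> = X x" using assms by (simp add: sum.delta finite_multi_idx tensor_def)
    finally show "X x = (\<Sum>d\<in>multi_idx D. sc (X d) (unitv d)) x" by simp
  qed
  also have "\<dots> \<in> tv.span (unitv ` multi_idx D)"
    by (intro tv.span_sum tv.span_scale tv.span_base) auto
  finally show ?thesis .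
qed

lemma pw_dependent:
  assumes tB: "tensor (Ds @ Ds) B"
  shows "\<exists>c n. (\<exists>k<n. c k \<noteq> 0) \<and> (\<Sum>k<n. sc (c k) (pw Ds B (Suc k))) = 0"
proof -
  define N where "N = card (multi_idx (Ds @ Ds))"
  define F where "F = (\<lambda>k. pw Ds B (Suc k))"
  define T where "T = unitv ` multi_idx (Ds @ Ds)"
  have finT: "finite T" unfolding T_def by (simp add: finite_multi_idx)
  have cardT: "card T \<le> N" unfolding T_def N_def by (rule card_image_le) (simp add: finite_multi_idx)
  show ?thesis
  proof (cases "inj_on F {..<Suc N}")
    case True
    define S where "S = F ` {..<Suc N}"
    have cardS: "card S = Suc N" unfolding S_def using True by (simp add: card_image)
    have finS: "finite S" unfolding S_def by simp
    have spS: "S \<subseteq> tv.span T"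
      unfolding S_def T_def F_def by (auto intro!: tensor_in_span tensor_ein)
    have "tv.dependent S"
    proof (rule ccontr)
      assume "\<not> tv.dependent S"
      from tv.independent_span_bound[OF finT this spS] cardS cardT show False by simp
    qed
    then obtain u v where uv: "v \<in> S" "u v \<noteq> 0" "(\<Sum>v\<in>S. sc (u v) v) = 0"
      using tv.dependent_finite[OF finS] by blast
    define c where "c = (\<lambda>k. u (F k))"
    have "(\<Sum>k<Suc N. sc (c k) (F k)) = (\<Sum>v\<in>S. sc (u v) v)"
      unfolding S_def c_def using sum.reindex[OF True, of "\<lambda>v. sc (u v) v"] by simp
    moreover have "\<exists>k<Suc N. c k \<noteq> 0" using uv(1,2) unfolding S_def c_def by auto
    ultimately show ?thesis using uv(3) unfolding F_def by metis
  next
    case False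
    then obtain a b where ab: "a < Suc N" "b < Suc N" "a \<noteq> b" "F a = F b"
      unfolding inj_on_def by auto
    define c where "c = (\<lambda>k. if k = a then 1 else if k = b then -1 else (0::complex))"
    have "(\<Sum>k<Suc N. sc (c k) (F k)) = (\<Sum>k<Suc N. (if k = a then F k else 0) - (if k = b then F k else 0))"
      by (rule sum.cong) (auto simp: c_def sc_def ab(3) zero_fun_def fun_eq_iff)
    also have "\<dots> = F a - F b" using ab by (simp add: sum_subtractf sum.delta)
    also have "\<dots> = 0" using ab by simp
    finally have "(\<Sum>k<Suc N. sc (c k) (F k)) = 0" .
    moreover have "c a \<noteq> 0" by (simp add: c_def)
    ultimately show ?thesis using ab(1) unfolding F_def by metis
  qed
qed

lemma herm_ginv:
  assumes tB: "tensor (Ds @ Ds) B" and hB: "herm Ds Ds B = B"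
  shows "\<exists>G. tensor (Ds @ Ds) G \<and> herm Ds Ds G = G \<and> ein Ds Ds Ds B (ein Ds Ds Ds G B) = B"
proof -
  obtain G where tG: "tensor (Ds @ Ds) G" and g: "ein Ds Ds Ds B (ein Ds Ds Ds G B) = B"
    using pw_dependent[OF tB] ginv_from_rel[OF tB hB] by metis
  define H where "H = sc (1/2) (G + herm Ds Ds G)"
  have tH: "tensor (Ds @ Ds) H" unfolding H_def by (intro tensor_sc tensor_add tG tensor_herm)
  have hH: "herm Ds Ds H = H"
    unfolding H_def herm_sc herm_add herm_herm[OF tG] by (simp add: add.commute)
  have g2: "ein Ds Ds Ds B (ein Ds Ds Ds (herm Ds Ds G) B) = B"
  proof -
    have "herm Ds Ds (ein Ds Ds Ds B (ein Ds Ds Ds G B)) = herm Ds Ds B" using g by simp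
    thus ?thesis using hB by (simp add: herm_ein ein_assoc)
  qed
  have "ein Ds Ds Ds B (ein Ds Ds Ds H B) = sc (1/2) (B + B)"
    unfolding H_def ein_sc_left ein_sc_right ein_add_left ein_add_right g g2 ..
  also have "\<dots> = B" by (simp add: sc_def fun_eq_iff)
  finally show ?thesis using tH hH by blast
qed



lemma ein_ctx2: "ein Ks Ms Ls (ein Ks Ns Ms U1 U2) V = W \<Longrightarrow>
  ein Is Ms Ls (ein Is Ns Ms (ein Is Ks Ns P U1) U2) V = ein Is Ks Ls P W"
  by (metis ein_assoc)

lemma inv13:
  assumes tA: "tensor (Is @ Js) A"
  shows "\<exists>X. tensor (Js @ Is) X \<and> ein Is Is Js (ein Is Js Is A X) A = A
           \<and> herm Is Is (ein Is Js Is A X) = ein Is Js Is A X"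
proof -
  define B where "B = ein Js Is Js (herm Is Js A) A"
  have Bdef: "ein Js Is Js (herm Is Js A) A = B" unfolding B_def ..
  have tB: "tensor (Js @ Js) B" unfolding B_def by (rule tensor_ein)
  have hB: "herm Js Js B = B" unfolding B_def by (simp add: herm_ein herm_herm[OF tA])
  obtain G where tG: "tensor (Js @ Js) G" and hG: "herm Js Js G = G"
    and g: "ein Js Js Js B (ein Js Js Js G B) = B"
    using herm_ginv[OF tB hB] by blast
  have g': "ein Js Js Js (ein Js Js Js B G) B = B" using g by (simp add: ein_assoc)
  define E where "E = ein Is Js Js (ein Is Js Js A G) B - A"
  have tE: "tensor (Is @ Js) E" unfolding E_def by (intro tensor_diff tensor_ein tA)
  have "ein Js Is Js (herm Is Js E) E = 0"
    unfolding E_def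
    by (simp add: ein_diff_left ein_diff_right herm_diff herm_ein hB hG ein_assoc Bdef
        ein_ctx[OF Bdef] g' ein_ctx[OF g'] ein_zero_left ein_zero_right)
  hence "E = 0" by (rule gram_zero[OF tE])
  hence agb: "ein Is Js Js (ein Is Js Js A G) B = A" unfolding E_def by simp
  define X where "X = ein Js Js Is G (herm Is Js A)"
  have "tensor (Js @ Is) X" unfolding X_def by (rule tensor_ein)
  moreover have "ein Is Is Js (ein Is Js Is A X) A = A"
    unfolding X_def by (simp add: ein_assoc ein_ctx[OF Bdef] agb)
  moreover have "herm Is Is (ein Is Js Is A X) = ein Is Js Is A X"
    unfolding X_def by (simp add: herm_ein ein_assoc herm_herm[OF tA] hG)
  ultimately show ?thesis by blast
qed

lemma MP_exists:
  assumes tA: "tensor (Is @ Js) A"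
  shows "\<exists>X. is_MP Is Js A X"
proof -
  obtain X3 where t3: "tensor (Js @ Is) X3" and a3: "ein Is Is Js (ein Is Js Is A X3) A = A"
    and h3: "herm Is Is (ein Is Js Is A X3) = ein Is Js Is A X3"
    using inv13[OF tA] by blast
  obtain X3' where t3': "tensor (Is @ Js) X3'"
    and a3': "ein Js Js Is (ein Js Is Js (herm Is Js A) X3') (herm Is Js A) = herm Is Js A"
    and h3': "herm Js Js (ein Js Is Js (herm Is Js A) X3') = ein Js Is Js (herm Is Js A) X3'"
    using inv13[OF tensor_herm, of Is Js A] by blast
  define X4 where "X4 = herm Is Js X3'"
  have a4: "ein Is Is Js (ein Is Js Is A X4) A = A"
  proof -
    have "herm Js Is (ein Js Js Is (ein Js Is Js (herm Is Js A) X3') (herm Is Js A)) = A"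
      using a3' herm_herm[OF tA] by simp
    thus ?thesis unfolding X4_def by (simp add: herm_ein herm_herm[OF tA] ein_assoc)
  qed
  have h4: "herm Js Js (ein Js Is Js X4 A) = ein Js Is Js X4 A"
  proof -
    have e: "ein Js Is Js X4 A = herm Js Js (ein Js Is Js (herm Is Js A) X3')"
      unfolding X4_def by (simp add: herm_ein herm_herm[OF tA])
    show ?thesis unfolding e h3' by (simp add: h3')
  qed
  define Y where "Y = ein Js Js Is (ein Js Is Js X4 A) X3"
  have "tensor (Js @ Is) Y" unfolding Y_def by (rule tensor_ein)
  moreover have "ein Is Js Js A (ein Js Is Js Y A) = A"
    unfolding Y_def by (simp add: ein_assoc a3 a4 ein_ctx2[OF a3] ein_ctx2[OF a4])
  moreover have "ein Js Is Is Y (ein Is Js Is A Y) = Y"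
    unfolding Y_def by (simp add: ein_assoc a3 a4 ein_ctx2[OF a3] ein_ctx2[OF a4])
  moreover have "herm Is Is (ein Is Js Is A Y) = ein Is Js Is A Y"
  proof -
    have "ein Is Js Is A Y = ein Is Js Is A X3"
      unfolding Y_def by (simp add: ein_assoc a3 a4 ein_ctx2[OF a3] ein_ctx2[OF a4])
    thus ?thesis using h3 by simp
  qed
  moreover have "herm Js Js (ein Js Is Js Y A) = ein Js Is Js Y A"
  proof -
    have "ein Js Is Js Y A = ein Js Is Js X4 A"
      unfolding Y_def by (simp add: ein_assoc a3 a4 ein_ctx2[OF a3] ein_ctx2[OF a4])
    thus ?thesis using h4 by simp
  qed
  ultimately show ?thesis unfolding is_MP_def by blast
qed

lemma pinv_MP: "tensor (Is @ Js) A \<Longrightarrow> is_MP Is Js A (pinv Is Js A)"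
proof -
  assume "tensor (Is @ Js) A"
  hence "\<exists>!X. is_MP Is Js A X" using MP_exists MP_unique by metis
  thus ?thesis unfolding pinv_def by (rule theI')
qed

lemma pinv_eqI: "is_MP Is Js A X \<Longrightarrow> pinv Is Js A = X"
  unfolding pinv_def by (rule the_equality) (auto intro: MP_unique)



lemma sw1: "tensor (Is @ Hs) X \<Longrightarrow> herm Is Is N = N \<Longrightarrow>
  herm Hs Hs (ein Hs Is Hs (herm Is Hs X) (ein Is Is Hs N X)) = ein Hs Is Hs (herm Is Hs X) (ein Is Is Hs N X)"
  by (simp add: herm_ein herm_herm ein_assoc)

lemma sw2: "tensor (Hs @ Is) X \<Longrightarrow> herm Is Is N = N \<Longrightarrow>
  herm Hs Hs (ein Hs Is Hs X (ein Is Is Hs N (herm Hs Is X))) = ein Hs Is Hs X (ein Is Is Hs N (herm Hs Is X))"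
  by (simp add: herm_ein herm_herm ein_assoc)

theorem theorem4p1:
  fixes Is Js Hs Gs :: "nat list"
    and R S T A Z :: "nat list \<Rightarrow> complex"
  assumes "tensor (Is @ Hs) R" and "tensor (Hs @ Gs) S" and "tensor (Gs @ Js) T"
    and "A = ein Is Hs Js R (ein Hs Gs Js S T)"
    and "Z = ein Js Gs Is (pinv Gs Js T) (ein Gs Hs Is (pinv Hs Gs S) (pinv Is Hs R))"
  shows "pinv Is Js A = Z \<longleftrightarrow>
    (ein Hs Is Gs (pinv Is Hs R) (ein Is Js Gs A (ein Js Is Gs Z (ein Is Js Gs A (pinv Gs Js T))))
       = ein Hs Is Gs (pinv Is Hs R) (ein Is Js Gs A (pinv Gs Js T))
     \<and> ein Gs Js Hs T (ein Js Is Hs Z (ein Is Js Hs A (ein Js Is Hs Z R)))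
       = ein Gs Js Hs T (ein Js Is Hs Z R)
     \<and> herm Hs Hs (ein Hs Is Hs (herm Is Hs R) (ein Is Js Hs A (ein Js Is Hs Z R)))
       = ein Hs Is Hs (herm Is Hs R) (ein Is Js Hs A (ein Js Is Hs Z R))
     \<and> herm Gs Gs (ein Gs Js Gs T (ein Js Is Gs Z (ein Is Js Gs A (herm Gs Js T))))
       = ein Gs Js Gs T (ein Js Is Gs Z (ein Is Js Gs A (herm Gs Js T))))"
proof -
  note tR = assms(1) and tS = assms(2) and tT = assms(3)
  define R' where "R' = pinv Is Hs R"
  define S' where "S' = pinv Hs Gs S"
  define T' where "T' = pinv Gs Js T"
  have mR: "is_MP Is Hs R R'" unfolding R'_def by (rule pinv_MP[OF tR])
  have mT: "is_MP Gs Js T T'" unfolding T'_def by (rule pinv_MP[OF tT])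
  have tR': "tensor (Hs @ Is) R'" using mR by (simp add: is_MP_def)
  have tT': "tensor (Js @ Gs) T'" using mT by (simp add: is_MP_def)
  have r1: "ein Is Is Hs (ein Is Hs Is R R') R = R" using mR by (simp add: is_MP_def ein_assoc)
  have r2: "ein Hs Hs Is (ein Hs Is Hs R' R) R' = R'" using mR by (simp add: is_MP_def ein_assoc)
  have r3: "herm Is Is (ein Is Hs Is R R') = ein Is Hs Is R R'" using mR by (simp add: is_MP_def)
  have t1: "ein Gs Gs Js (ein Gs Js Gs T T') T = T" using mT by (simp add: is_MP_def ein_assoc)
  have t2: "ein Js Js Gs (ein Js Gs Js T' T) T' = T'" using mT by (simp add: is_MP_def ein_assoc)
  have t4: "herm Js Js (ein Js Gs Js T' T) = ein Js Gs Js T' T" using mT by (simp add: is_MP_def)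
  have Adef: "A = ein Is Gs Js (ein Is Hs Gs R S) T" using assms(4) by (simp add: ein_assoc)
  have Zdef: "Z = ein Js Hs Is (ein Js Gs Hs T' S') R'" using assms(5) unfolding T'_def S'_def R'_def
    by (simp add: ein_assoc)
  have K1: "ein Is Is Js (ein Is Hs Is R R') A = A"
    unfolding Adef by (simp add: ein_assoc r1)
  have K2: "ein Is Gs Js (ein Is Js Gs A T') T = A"
    unfolding Adef by (simp add: ein_assoc ein_ctx2[OF t1])
  have K3: "ein Js Hs Is (ein Js Is Hs Z R) R' = Z"
    unfolding Zdef by (simp add: ein_assoc ein_ctx2[OF r2])
  have K4: "ein Js Js Is (ein Js Gs Js T' T) Z = Z"
    unfolding Zdef by (simp add: ein_assoc t2)
  have tA: "tensor (Is @ Js) A" unfolding Adef by (rule tensor_ein)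
  have tZ: "tensor (Js @ Is) Z" unfolding Zdef by (rule tensor_ein)
  have e3: "ein Hs Is Hs (herm Is Hs R) (ein Is Js Hs A (ein Js Is Hs Z R))
      = ein Hs Is Hs (herm Is Hs R) (ein Is Is Hs (ein Is Js Is A Z) R)"
    by (simp only: ein_assoc)
  have e4: "ein Gs Js Gs T (ein Js Is Gs Z (ein Is Js Gs A (herm Gs Js T)))
      = ein Gs Js Gs T (ein Js Js Gs (ein Js Is Js Z A) (herm Gs Js T))"
    by (simp only: ein_assoc)
  show ?thesis
    unfolding R'_def[symmetric] T'_def[symmetric]
  proof
    assume "pinv Is Js A = Z"
    hence mA: "is_MP Is Js A Z" using pinv_MP[OF tA] by simp
    have a1: "ein Is Is Js (ein Is Js Is A Z) A = A" using mA by (simp add: is_MP_def ein_assoc)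
    have a2: "ein Js Js Is (ein Js Is Js Z A) Z = Z" using mA by (simp add: is_MP_def ein_assoc)
    have a3: "herm Is Is (ein Is Js Is A Z) = ein Is Js Is A Z" using mA by (simp add: is_MP_def)
    have a4: "herm Js Js (ein Js Is Js Z A) = ein Js Is Js Z A" using mA by (simp add: is_MP_def)
    have i: "ein Hs Is Gs R' (ein Is Js Gs A (ein Js Is Gs Z (ein Is Js Gs A T')))
       = ein Hs Is Gs R' (ein Is Js Gs A T')"
      by (simp add: ein_assoc ein_ctx2[OF a1])
    have ii: "ein Gs Js Hs T (ein Js Is Hs Z (ein Is Js Hs A (ein Js Is Hs Z R)))
       = ein Gs Js Hs T (ein Js Is Hs Z R)"
      by (simp add: ein_assoc ein_ctx2[OF a2])
    have iii: "herm Hs Hs (ein Hs Is Hs (herm Is Hs R) (ein Is Js Hs A (ein Js Is Hs Z R)))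
       = ein Hs Is Hs (herm Is Hs R) (ein Is Js Hs A (ein Js Is Hs Z R))"
      unfolding e3 by (rule sw1[OF tR a3])
    have iv: "herm Gs Gs (ein Gs Js Gs T (ein Js Is Gs Z (ein Is Js Gs A (herm Gs Js T))))
       = ein Gs Js Gs T (ein Js Is Gs Z (ein Is Js Gs A (herm Gs Js T)))"
      unfolding e4 by (rule sw2[OF tT a4])
    show "ein Hs Is Gs R' (ein Is Js Gs A (ein Js Is Gs Z (ein Is Js Gs A T')))
       = ein Hs Is Gs R' (ein Is Js Gs A T') \<and> 
       ein Gs Js Hs T (ein Js Is Hs Z (ein Is Js Hs A (ein Js Is Hs Z R)))
       = ein Gs Js Hs T (ein Js Is Hs Z R) \<and>
       herm Hs Hs (ein Hs Is Hs (herm Is Hs R) (ein Is Js Hs A (ein Js Is Hs Z R)))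
       = ein Hs Is Hs (herm Is Hs R) (ein Is Js Hs A (ein Js Is Hs Z R)) \<and>
       herm Gs Gs (ein Gs Js Gs T (ein Js Is Gs Z (ein Is Js Gs A (herm Gs Js T))))
       = ein Gs Js Gs T (ein Js Is Gs Z (ein Is Js Gs A (herm Gs Js T)))"
      using i ii iii iv by blast
  next
    assume H: "ein Hs Is Gs R' (ein Is Js Gs A (ein Js Is Gs Z (ein Is Js Gs A T')))
       = ein Hs Is Gs R' (ein Is Js Gs A T') \<and> 
       ein Gs Js Hs T (ein Js Is Hs Z (ein Is Js Hs A (ein Js Is Hs Z R)))
       = ein Gs Js Hs T (ein Js Is Hs Z R) \<and>
       herm Hs Hs (ein Hs Is Hs (herm Is Hs R) (ein Is Js Hs A (ein Js Is Hs Z R)))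
       = ein Hs Is Hs (herm Is Hs R) (ein Is Js Hs A (ein Js Is Hs Z R)) \<and>
       herm Gs Gs (ein Gs Js Gs T (ein Js Is Gs Z (ein Is Js Gs A (herm Gs Js T))))
       = ein Gs Js Gs T (ein Js Is Gs Z (ein Is Js Gs A (herm Gs Js T)))"
    hence i: "ein Hs Is Gs R' (ein Is Js Gs A (ein Js Is Gs Z (ein Is Js Gs A T')))
       = ein Hs Is Gs R' (ein Is Js Gs A T')"
      and ii: "ein Gs Js Hs T (ein Js Is Hs Z (ein Is Js Hs A (ein Js Is Hs Z R)))
       = ein Gs Js Hs T (ein Js Is Hs Z R)"
      and iii: "herm Hs Hs (ein Hs Is Hs (herm Is Hs R) (ein Is Js Hs A (ein Js Is Hs Z R)))
       = ein Hs Is Hs (herm Is Hs R) (ein Is Js Hs A (ein Js Is Hs Z R))"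
      and iv: "herm Gs Gs (ein Gs Js Gs T (ein Js Is Gs Z (ein Is Js Gs A (herm Gs Js T))))
       = ein Gs Js Gs T (ein Js Is Gs Z (ein Is Js Gs A (herm Gs Js T)))"
      by blast+
    have m1: "ein Is Js Js A (ein Js Is Js Z A) = A"
    proof -
      have "ein Is Js Js A (ein Js Is Js Z A) = ein Is Gs Js (ein Is Hs Gs R
          (ein Hs Is Gs R' (ein Is Js Gs A (ein Js Is Gs Z (ein Is Js Gs A T'))))) T"
        by (simp add: ein_assoc K1 ein_ctx2[OF K2])
      also have "\<dots> = ein Is Gs Js (ein Is Hs Gs R (ein Hs Is Gs R' (ein Is Js Gs A T'))) T"
        by (simp only: i)
      also have "\<dots> = A" by (simp add: ein_assoc K1 K2)
      finally show ?thesis .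
    qed
    have m2: "ein Js Is Is Z (ein Is Js Is A Z) = Z"
    proof -
      have "ein Js Is Is Z (ein Is Js Is A Z) = ein Js Hs Is (ein Js Gs Hs T'
          (ein Gs Js Hs T (ein Js Is Hs Z (ein Is Js Hs A (ein Js Is Hs Z R))))) R'"
        by (simp add: ein_assoc K4 ein_ctx2[OF K3])
      also have "\<dots> = ein Js Hs Is (ein Js Gs Hs T' (ein Gs Js Hs T (ein Js Is Hs Z R))) R'"
        by (simp only: ii)
      also have "\<dots> = Z" by (simp add: ein_assoc K3 K4)
      finally show ?thesis .
    qed
    have rr: "ein Is Hs Is (herm Hs Is R') (herm Is Hs R) = ein Is Hs Is R R'"
      using r3 by (simp add: herm_ein)
    have tt: "ein Js Gs Js (herm Gs Js T) (herm Js Gs T') = ein Js Gs Js T' T"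
      using t4 by (simp add: herm_ein)
    have m3: "herm Is Is (ein Is Js Is A Z) = ein Is Js Is A Z"
    proof -
      have e: "ein Is Js Is A Z = ein Is Hs Is (herm Hs Is R')
         (ein Hs Hs Is (ein Hs Is Hs (herm Is Hs R) (ein Is Js Hs A (ein Js Is Hs Z R))) R')"
        by (simp add: ein_assoc rr K1 ein_ctx2[OF K3])
      show ?thesis unfolding e by (rule sw1[OF tR' iii])
    qed
    have m4: "herm Js Js (ein Js Is Js Z A) = ein Js Is Js Z A"
    proof -
      have e: "ein Js Is Js Z A = ein Js Gs Js T'
         (ein Gs Gs Js (ein Gs Js Gs T (ein Js Is Gs Z (ein Is Js Gs A (herm Gs Js T)))) (herm Js Gs T'))"
        by (simp add: ein_assoc ein_ctx[OF tt] K4 ein_ctx2[OF K2])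
      show ?thesis unfolding e by (rule sw2[OF tT' iv])
    qed
    have "is_MP Is Js A Z" unfolding is_MP_def using tZ m1 m2 m3 m4 by blast
    thus "pinv Is Js A = Z" by (rule pinv_eqI)
  qed
qed

end
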